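(* Let $\vec r:\mathbb{Z}\to\mathbb{R}^2$ be a nondegenerate discrete planar curve whose first and second centroaffine curvatures $\kappa_n,\bar\kappa_n$ are $6$-periodic in $n$. Then $\vec r$ is a convex hexagon with parallel and equi-length opposite sides (i.e. $\vec r$ is closed with period $6$, simple, convex, and $\vec t_{k+3}=-\vec t_k$ for all $k$) if and only if for all $n$ $$\kappa_n>0,\qquad \kappa_n=\kappa_{n+3}=\frac{1}{\bar\kappa_{n+1}}=\frac{1}{\bar\kappa_{n+4}},\qquad \kappa_n\kappa_{n+1}\kappa_{n+2}=1.$$
   Context: A discrete planar curve is a map $\vec r:\mathbb{Z}\to\mathbb{R}^2$; $\vec r_k=\vec r(k)$, $\vec t_k=\vec r_{k+1}-\vec r_k$, $[\vec a,\vec b]$ the $2\times2$ determinant. Nondegenerate: $[\vec t_{k-1},\vec t_k]\ne0$ for all $k$. First and second centroaffine curvatures: $\kappa_k=\frac{[\vec t_k,\vec t_{k+1}]}{[\vec t_{k-1},\vec t_k]}$, $\bar\kappa_k=\frac{[\vec t_{k-1},\vec t_{k+1}]}{[\vec t_{k-1},\vec t_k]}$. Closed with period $q$: $\vec r(k+q)=\vec r(k)$ for all $k$, $q$ minimal. Extend $\vec r$ to $\mathbb{R}$ by linear interpolation on each $[k,k+1]$; a closed curve is simple if this map is injective on $[k,k+q)$. Convex: for each line through $\vec r_k,\vec r_{k+1}$, all vertices lie in one closed half-plane bounded by it. *)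

theory Defs
  imports "HOL-Analysis.Analysis"
begin

type_synonym curve = "int \<Rightarrow> real \<times> real"

definition det2 :: "real \<times> real \<Rightarrow> real \<times> real \<Rightarrow> real" where
  "det2 a b = fst a * snd b - snd a * fst b"

definition tang :: "curve \<Rightarrow> int \<Rightarrow> real \<times> real" where
  "tang r k = r (k + 1) - r k"

definition nondegenerate :: "curve \<Rightarrow> bool" where
  "nondegenerate r \<longleftrightarrow> (\<forall>k. det2 (tang r (k - 1)) (tang r k) \<noteq> 0)"

definition kappa :: "curve \<Rightarrow> int \<Rightarrow> real" where
  "kappa r k = det2 (tang r k) (tang r (k + 1)) / det2 (tang r (k - 1)) (tang r k)"

definition kappabar :: "curve \<Rightarrow> int \<Rightarrow> real" where
  "kappabar r k = det2 (tang r (k - 1)) (tang r (k + 1)) / det2 (tang r (k - 1)) (tang r k)"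

definition closed_period :: "curve \<Rightarrow> int \<Rightarrow> bool" where
  "closed_period r q \<longleftrightarrow> q > 0 \<and> (\<forall>k. r (k + q) = r k) \<and>
     (\<forall>p. 0 < p \<and> p < q \<longrightarrow> \<not> (\<forall>k. r (k + p) = r k))"

definition interp :: "curve \<Rightarrow> real \<Rightarrow> real \<times> real" where
  "interp r s = r \<lfloor>s\<rfloor> + (s - of_int \<lfloor>s\<rfloor>) *\<^sub>R (r (\<lfloor>s\<rfloor> + 1) - r \<lfloor>s\<rfloor>)"

definition simple_closed :: "curve \<Rightarrow> int \<Rightarrow> bool" where
  "simple_closed r q \<longleftrightarrow> closed_period r q \<and>
     (\<forall>k. inj_on (interp r) {real_of_int k ..< real_of_int k + real_of_int q})"

definition convex_curve :: "curve \<Rightarrow> bool" where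
  "convex_curve r \<longleftrightarrow> (\<forall>k. (\<forall>j. det2 (tang r k) (r j - r k) \<ge> 0) \<or>
                          (\<forall>j. det2 (tang r k) (r j - r k) \<le> 0))"

end

theory Submission
  imports Defs
begin


lemma det2_self[simp]: "det2 a a = 0" by (simp add: det2_def)
lemma det2_add_right[simp]: "det2 a (b + c) = det2 a b + det2 a c" by (simp add: det2_def algebra_simps)
lemma det2_add_left[simp]: "det2 (b + c) a = det2 b a + det2 c a" by (simp add: det2_def algebra_simps)
lemma det2_neg_right[simp]: "det2 a (- b) = - det2 a b" by (simp add: det2_def algebra_simps)
lemma det2_neg_left[simp]: "det2 (- a) b = - det2 a b" by (simp add: det2_def algebra_simps)
lemma det2_diff_right[simp]: "det2 a (b - c) = det2 a b - det2 a c" by (simp add: det2_def algebra_simps)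
lemma det2_scale_right[simp]: "det2 a (u *\<^sub>R b) = u * det2 a b" by (simp add: det2_def algebra_simps)
lemma det2_scale_left[simp]: "det2 (u *\<^sub>R a) b = u * det2 a b" by (simp add: det2_def algebra_simps)
lemma det2_swap: "det2 b a = - det2 a b" by (simp add: det2_def algebra_simps)
lemma det2_zero[simp]: "det2 a 0 = 0" "det2 0 a = 0" by (simp_all add: det2_def)

lemma det2_indep:
  assumes "det2 u v \<noteq> 0" "det2 u x = 0" "det2 v x = 0" shows "x = 0"
proof -
  obtain u1 u2 v1 v2 x1 x2 where e: "u = (u1,u2)" "v = (v1,v2)" "x = (x1,x2)" by (cases u, cases v, cases x) auto
  have d: "u1 * v2 - u2 * v1 \<noteq> 0" "u1 * x2 - u2 * x1 = 0" "v1 * x2 - v2 * x1 = 0" using assms by (auto simp: e det2_def)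
  have "x1 * (u1 * v2 - u2 * v1) = v1 * (u1 * x2 - u2 * x1) - u1 * (v1 * x2 - v2 * x1)" by (simp add: algebra_simps)
  then have 1: "x1 = 0" using d by simp
  have "x2 * (u1 * v2 - u2 * v1) = v2 * (u1 * x2 - u2 * x1) - u2 * (v1 * x2 - v2 * x1)" by (simp add: algebra_simps)
  then have 2: "x2 = 0" using d by simp
  show ?thesis using 1 2 e by (simp add: zero_prod_def)
qed

lemma nd_D: "nondegenerate r \<Longrightarrow> det2 (tang r (n - 1)) (tang r n) \<noteq> 0"
  by (simp add: nondegenerate_def)
lemma nd_D1: "nondegenerate r \<Longrightarrow> det2 (tang r n) (tang r (n + 1)) \<noteq> 0"
  using nd_D[of r "n+1"] by simp

lemma tang_nz: "nondegenerate r \<Longrightarrow> tang r n \<noteq> 0"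
  using nd_D1[of r n] by auto

lemma fw_pos:
  assumes nd: "nondegenerate r" and cv: "convex_curve r"
  shows "kappa r n > 0"
proof -
  have e1: "r (n+2) - r n = tang r n + tang r (n+1)" by (simp add: tang_def add.assoc)
  have e2: "r (n-1) - r n = - tang r (n-1)" by (simp add: tang_def)
  have A: "det2 (tang r n) (r (n+2) - r n) = det2 (tang r n) (tang r (n+1))" by (simp add: e1)
  have B: "det2 (tang r n) (r (n-1) - r n) = det2 (tang r (n-1)) (tang r n)"
    by (simp add: e2 det2_swap[of "tang r n"])
  have "det2 (tang r n) (tang r (n+1)) \<noteq> 0" "det2 (tang r (n-1)) (tang r n) \<noteq> 0"
    using nd_D1[OF nd] nd_D[OF nd] by auto
  moreover from cv have "(det2 (tang r n) (r (n+2) - r n) \<ge> 0 \<and> det2 (tang r n) (r (n-1) - r n) \<ge> 0) \<or>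
     (det2 (tang r n) (r (n+2) - r n) \<le> 0 \<and> det2 (tang r n) (r (n-1) - r n) \<le> 0)"
    unfolding convex_curve_def by blast
  ultimately show ?thesis unfolding kappa_def A B
    by (auto simp: zero_less_divide_iff order.order_iff_strict)
qed

lemma fw:
  assumes nd: "nondegenerate r" and cv: "convex_curve r" and ap: "\<forall>k. tang r (k + 3) = - tang r k"
  shows "kappa r n > 0 \<and> kappa r n = kappa r (n + 3) \<and>
              kappa r n = 1 / kappabar r (n + 1) \<and> kappa r n = 1 / kappabar r (n + 4) \<and>
              kappa r n * kappa r (n + 1) * kappa r (n + 2) = 1"
proof -
  have t3: "tang r (k+3) = - tang r k" for k using ap by simp
  have t2: "tang r (k+2) = - tang r (k - 1)" for k using ap[rule_format, of "k - 1"] by (simp add: algebra_simps)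
  have D3: "det2 (tang r (k+2)) (tang r (k+3)) = det2 (tang r (k - 1)) (tang r k)" for k
    using t3[of k] t2[of k] by (simp add: det2_swap[of "tang r (k+2)"])
  have E: "det2 (tang r k) (tang r (k+2)) = det2 (tang r (k - 1)) (tang r k)" for k
    using t2[of k] by (simp add: det2_swap[of "tang r k"])
  have nz: "det2 (tang r (k - 1)) (tang r k) \<noteq> 0" for k using nd_D[OF nd] .
  have nz1: "det2 (tang r k) (tang r (k+1)) \<noteq> 0" for k using nd_D1[OF nd] .
  have k: "kappa r k = det2 (tang r k) (tang r (k+1)) / det2 (tang r (k - 1)) (tang r k)" for k
    by (simp add: kappa_def)
  have kb: "kappabar r (k+1) = det2 (tang r (k - 1)) (tang r k) / det2 (tang r k) (tang r (k+1))" for k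
    using E[of k] by (simp add: kappabar_def add.assoc)
  have a: "kappa r (n+3) = kappa r n"
    using D3[of n] D3[of "n+1"] k[of "n+3"] k[of n] by (simp add: algebra_simps)
  have b: "kappabar r (n+4) = kappabar r (n+1)"
    using D3[of n] D3[of "n+1"] kb[of n] kb[of "n+3"] by (simp add: algebra_simps)
  have c: "kappa r n * kappa r (n + 1) * kappa r (n + 2) = 1"
  proof -
    have i: "n+2-1 = n+1" "n+2+1 = n+3" "n+1-1 = n" "n+1+1 = n+2" by simp_all
    have "kappa r (n+1) = det2 (tang r (n+1)) (tang r (n+2)) / det2 (tang r n) (tang r (n+1))"
         "kappa r (n+2) = det2 (tang r (n+2)) (tang r (n+3)) / det2 (tang r (n+1)) (tang r (n+2))"
      by (simp_all only: kappa_def i)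
    then show ?thesis using D3[of n] nz[of n] nz1[of n] nz1[of "n+1"] by (simp add: k[of n] add.assoc)
  qed
  have d: "kappa r n = 1 / kappabar r (n + 1)"
    using nz[of n] nz1[of n] by (simp only: k[of n] kb[of n]) simp
  show ?thesis by (intro conjI fw_pos[OF nd cv]) (simp_all only: a b c d[symmetric])
qed


lemma ar1: "(P::real) * Q > 0 \<Longrightarrow> 0 \<le> u \<Longrightarrow> P + u * Q \<noteq> 0"
proof -
  assume h: "P * Q > 0" "0 \<le> u"
  have "P * (P + u * Q) = P * P + u * (P * Q)" by (simp add: algebra_simps)
  moreover have "P * P > 0" using h by (auto simp: zero_less_mult_iff)
  moreover have "u * (P * Q) \<ge> 0" using h by simp
  ultimately have "P * (P + u * Q) > 0" by linarith
  then show ?thesis by auto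
qed

lemma bw_facts:
  assumes nd: "nondegenerate r"
    and H: "\<forall>n. kappa r n > 0 \<and> kappa r n = 1 / kappabar r (n + 1) \<and>
              kappa r n * kappa r (n + 1) * kappa r (n + 2) = 1"
  shows "det2 (tang r n) (tang r (n+2)) = det2 (tang r (n - 1)) (tang r n)"
    and "det2 (tang r (n+2)) (tang r (n+3)) = det2 (tang r (n - 1)) (tang r n)"
    and "det2 (tang r n) (tang r (n+1)) * det2 (tang r (n - 1)) (tang r n) > 0"
proof -
  have nz: "det2 (tang r (k - 1)) (tang r k) \<noteq> 0" for k using nd_D[OF nd] .
  have nz1: "det2 (tang r k) (tang r (k+1)) \<noteq> 0" for k using nd_D1[OF nd] .
  have nz2: "det2 (tang r (k+1)) (tang r (k+2)) \<noteq> 0" for k using nd_D1[OF nd, of "k+1"] by (simp add: add.assoc)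
  have k: "kappa r k = det2 (tang r k) (tang r (k+1)) / det2 (tang r (k - 1)) (tang r k)" for k
    by (simp add: kappa_def)
  have kb: "kappabar r (k+1) = det2 (tang r k) (tang r (k+2)) / det2 (tang r k) (tang r (k+1))" for k
    by (simp add: kappabar_def add.assoc)
  have i: "n+2-1 = n+1" "n+2+1 = n+3" "n+1-1 = n" "n+1+1 = n+2" by simp_all
  have k1: "kappa r (n+1) = det2 (tang r (n+1)) (tang r (n+2)) / det2 (tang r n) (tang r (n+1))"
       "kappa r (n+2) = det2 (tang r (n+2)) (tang r (n+3)) / det2 (tang r (n+1)) (tang r (n+2))"
    by (simp_all only: kappa_def i)
  show "det2 (tang r n) (tang r (n+2)) = det2 (tang r (n - 1)) (tang r n)"
  proof -
    define A where "A = det2 (tang r n) (tang r (n+1))"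
    define B where "B = det2 (tang r (n - 1)) (tang r n)"
    define X where "X = det2 (tang r n) (tang r (n+2))"
    have "kappa r n = 1 / kappabar r (n+1)" using H by blast
    then have "A / B = 1 / (X / A)" unfolding A_def B_def X_def k[of n] kb[of n] .
    moreover have "A \<noteq> 0" "B \<noteq> 0" using nz[of n] nz1[of n] by (auto simp: A_def B_def)
    ultimately have "X = B" by (cases "X = 0") (auto simp: field_simps)
    then show ?thesis by (simp add: X_def B_def)
  qed
  show "det2 (tang r (n+2)) (tang r (n+3)) = det2 (tang r (n - 1)) (tang r n)"
  proof -
    have "kappa r n * kappa r (n + 1) * kappa r (n + 2) = 1" using H by blast
    then have "(det2 (tang r n) (tang r (n+1)) / det2 (tang r (n - 1)) (tang r n)) *
       (det2 (tang r (n+1)) (tang r (n+2)) / det2 (tang r n) (tang r (n+1))) *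
       (det2 (tang r (n+2)) (tang r (n+3)) / det2 (tang r (n+1)) (tang r (n+2))) = 1"
      unfolding k[of n] k1 .
    moreover have "\<And>a0 a1 a2 a3::real. a0 \<noteq> 0 \<Longrightarrow> a1 \<noteq> 0 \<Longrightarrow> a2 \<noteq> 0 \<Longrightarrow>
       (a1/a0)*(a2/a1)*(a3/a2) = 1 \<Longrightarrow> a3 = a0" by (simp add: field_simps)
    ultimately show ?thesis using nz[of n] nz1[of n] nz2[of n] by blast
  qed
  show "det2 (tang r n) (tang r (n+1)) * det2 (tang r (n - 1)) (tang r n) > 0"
  proof -
    have "kappa r n > 0" using H by blast
    then show ?thesis unfolding k[of n] by (simp only: zero_less_divide_iff zero_less_mult_iff)
  qed
qed

lemma bw_antiper:
  assumes nd: "nondegenerate r"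
    and H: "\<forall>n. kappa r n > 0 \<and> kappa r n = 1 / kappabar r (n + 1) \<and>
              kappa r n * kappa r (n + 1) * kappa r (n + 2) = 1"
  shows "tang r (k + 3) = - tang r k"
proof -
  have E1: "det2 (tang r (k+1)) (tang r (k+3)) = det2 (tang r k) (tang r (k+1))"
    using bw_facts(1)[OF nd H, of "k+1"] by (simp add: add.assoc)
  have E0: "det2 (tang r k) (tang r (k+2)) = det2 (tang r (k - 1)) (tang r k)"
    using bw_facts(1)[OF nd H, of k] .
  have D3: "det2 (tang r (k+2)) (tang r (k+3)) = det2 (tang r (k - 1)) (tang r k)"
    using bw_facts(2)[OF nd H, of k] .
  have nz: "det2 (tang r (k+1)) (tang r (k+2)) \<noteq> 0" using nd_D1[OF nd, of "k+1"] by (simp add: add.assoc)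
  have "tang r (k+3) + tang r k = 0"
    apply (rule det2_indep[OF nz])
    using E1 E0 D3 by (simp_all add: det2_swap[of "tang r (k+1)" "tang r k"] det2_swap[of "tang r (k+2)" "tang r k"])
  then show ?thesis by (simp add: eq_neg_iff_add_eq_0)
qed

lemma rstep: "r (k+1) = r k + tang r k" by (simp add: tang_def)

lemma periodic6:
  fixes r :: curve
  assumes p: "\<forall>k. r (k + 6) = r k" shows "r (x + 6 * q) = r x"
proof -
  have n: "r (y + 6 * int n) = r y" for y n
  proof (induction n)
    case 0 then show ?case by simp
  next
    case (Suc n)
    have "r (y + 6 * int (Suc n)) = r ((y + 6 * int n) + 6)" by (simp add: algebra_simps)
    also have "\<dots> = r y" using p Suc by simp
    finally show ?case .
  qed
  show ?thesis
  proof (cases "q \<ge> 0")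
    case True then show ?thesis using n[of x "nat q"] by simp
  next
    case False
    have "r x = r ((x + 6 * q) + 6 * int (nat (-q)))" using False by simp
    then show ?thesis using n[of "x + 6*q" "nat (-q)"] by simp
  qed
qed


lemma verts:
  assumes ap: "\<forall>k. tang r (k + 3) = - tang r k"
  shows "r (m+2) = r m + tang r m + tang r (m+1)"
    and "r (m+3) = r m + tang r m + tang r (m+1) + tang r (m+2)"
    and "r (m+4) = r m + tang r (m+1) + tang r (m+2)"
    and "r (m+5) = r m + tang r (m+2)"
    and "r (m+6) = r m"
    and "tang r (m+4) = - tang r (m+1)"
    and "tang r (m+5) = - tang r (m+2)"
proof -
  have s: "r (k+1) = r k + tang r k" for k by (simp add: tang_def)
  have s1: "r (m+1) = r m + tang r m" using s .
  have s2: "r (m+2) = r (m+1) + tang r (m+1)" using s[of "m+1"] by (simp add: add.assoc)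
  have s3: "r (m+3) = r (m+2) + tang r (m+2)" using s[of "m+2"] by (simp add: add.assoc)
  have s4: "r (m+4) = r (m+3) + tang r (m+3)" using s[of "m+3"] by (simp add: add.assoc)
  have s5: "r (m+5) = r (m+4) + tang r (m+4)" using s[of "m+4"] by (simp add: add.assoc)
  have s6: "r (m+6) = r (m+5) + tang r (m+5)" using s[of "m+5"] by (simp add: add.assoc)
  have t3: "tang r (m+3) = - tang r m" using ap by simp
  show t4: "tang r (m+4) = - tang r (m+1)" using ap[rule_format, of "m+1"] by (simp add: add.assoc)
  show t5: "tang r (m+5) = - tang r (m+2)" using ap[rule_format, of "m+2"] by (simp add: add.assoc)
  show "r (m+2) = r m + tang r m + tang r (m+1)" using s1 s2 by simp
  show "r (m+3) = r m + tang r m + tang r (m+1) + tang r (m+2)" using s1 s2 s3 by simp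
  show "r (m+4) = r m + tang r (m+1) + tang r (m+2)" using s1 s2 s3 s4 t3 by simp
  show "r (m+5) = r m + tang r (m+2)" using s1 s2 s3 s4 s5 t3 t4 by simp
  show "r (m+6) = r m" using s1 s2 s3 s4 s5 s6 t3 t4 t5 by simp
qed

lemma minper:
  assumes nd: "nondegenerate r" and ap: "\<forall>k. tang r (k + 3) = - tang r k"
    and p: "0 < p" "p < 6" and hp: "\<forall>k. r (k + p) = r k"
  shows False
proof -
  have tp: "tang r (k + p) = tang r k" for k
  proof -
    have "r (k + p + 1) = r (k + 1)" using hp[rule_format, of "k+1"] by (simp add: algebra_simps)
    then show ?thesis using hp by (simp add: tang_def)
  qed
  have a3: "tang r 3 = - tang r 0" using ap[rule_format, of 0] by simp
  have a4: "tang r 4 = - tang r 1" using ap[rule_format, of 1] by simp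
  have a5: "tang r 5 = - tang r 2" using ap[rule_format, of 2] by simp
  have a6: "tang r 6 = - tang r 3" using ap[rule_format, of 3] by simp
  have D: "det2 (tang r 0) (tang r 1) \<noteq> 0" using nd_D1[OF nd, of 0] by simp
  have T: "tang r 0 \<noteq> 0" using tang_nz[OF nd] .
  have "p = 1 \<or> p = 2 \<or> p = 3 \<or> p = 4 \<or> p = 5" using p by auto
  then show False
  proof (elim disjE)
    assume "p = 1" then show False using tp[of 0] D by simp
  next
    assume "p = 2"
    then have "tang r 1 = - tang r 0" using tp[of 1] a3 by simp
    then show False using D by simp
  next
    assume "p = 3"
    then have "- tang r 0 = tang r 0" using tp[of 0] a3 by simp
    then have "tang r 0 + tang r 0 = 0" by (metis neg_eq_iff_add_eq_0)
    then have "(2::real) *\<^sub>R tang r 0 = 0" by (simp add: scaleR_2)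
    then show False using T by simp
  next
    assume "p = 4"
    then have "- tang r 1 = tang r 0" using tp[of 0] a4 by simp
    then have "tang r 1 = - tang r 0" by (metis minus_minus)
    then show False using D by simp
  next
    assume "p = 5"
    then have "tang r 1 = tang r 0" using tp[of 1] a6 a3 by simp
    then show False using D by simp
  qed
qed

lemma core:
  assumes nd: "nondegenerate r" and ap: "\<forall>k. tang r (k + 3) = - tang r k"
    and PQ: "det2 (tang r m) (tang r (m+1)) * det2 (tang r m) (tang r (m+2)) > 0"
    and d: "0 \<le> d" "d \<le> 5" and u: "0 \<le> u" "u < 1" and u': "0 \<le> u'" "u' < 1"
    and eq: "r m + u *\<^sub>R tang r m = r (m + d) + u' *\<^sub>R tang r (m + d)"
  shows "d = 0 \<and> u = u'"
proof -
  define a where "a = tang r m"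
  define b where "b = tang r (m+1)"
  define c where "c = tang r (m+2)"
  define P where "P = det2 a b"
  define Q where "Q = det2 a c"
  have PQ': "P * Q > 0" using PQ by (simp add: P_def Q_def a_def b_def c_def)
  have QP: "Q * P > 0" using PQ' by (simp add: mult.commute)
  have anz: "a \<noteq> 0" using tang_nz[OF nd] by (simp add: a_def)
  note V = verts[OF ap, of m, folded a_def b_def c_def]
  have t3: "tang r (m+3) = - a" using ap by (simp add: a_def)
  have s1: "r (m+1) = r m + a" by (simp add: tang_def a_def)
  have phi: "det2 a (r (m+d)) + u' * det2 a (tang r (m+d)) - det2 a (r m) = 0"
  proof -
    have "r (m+d) + u' *\<^sub>R tang r (m+d) - r m = u *\<^sub>R a" using eq by (simp add: a_def algebra_simps)
    then have "det2 a (r (m+d) + u' *\<^sub>R tang r (m+d) - r m) = 0" by simp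
    then show ?thesis by simp
  qed
  have "d = 0 \<or> d = 1 \<or> d = 2 \<or> d = 3 \<or> d = 4 \<or> d = 5" using d by auto
  then show ?thesis
  proof (elim disjE)
    assume d0: "d = 0"
    then have "u *\<^sub>R a = u' *\<^sub>R a" using eq by (simp add: a_def)
    then show ?thesis using anz d0 by simp
  next
    assume d1: "d = 1"
    then have "u' * P = 0" using phi s1 by (simp add: P_def b_def)
    then have "u' = 0" using PQ' by auto
    then have "u *\<^sub>R a = 1 *\<^sub>R a" using eq d1 s1 by (simp add: a_def)
    then have "u = 1" using anz by (simp only: scaleR_cancel_right) simp
    then show ?thesis using u by simp
  next
    assume "d = 2"
    then have "P + u' * Q = 0" using phi V(1) by (simp add: P_def Q_def flip: b_def c_def)
    then show ?thesis using ar1[OF PQ' u'(1)] by simp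
  next
    assume "d = 3"
    then have "P + Q = 0" using phi V(2) t3 by (simp add: P_def Q_def flip: b_def c_def)
    then show ?thesis using ar1[OF PQ', of 1] by simp
  next
    assume "d = 4"
    then have "Q + (1 - u') * P = 0" using phi V(3) V(6) by (simp add: P_def Q_def algebra_simps flip: b_def c_def)
    then show ?thesis using ar1[OF QP, of "1 - u'"] u' by simp
  next
    assume "d = 5"
    then have "(1 - u') * Q = 0" using phi V(4) V(7) by (simp add: P_def Q_def algebra_simps flip: b_def c_def)
    then show ?thesis using PQ' u' by auto
  qed
qed


lemma simple6:
  assumes nd: "nondegenerate r" and ap: "\<forall>k. tang r (k + 3) = - tang r k"
    and PQ: "\<forall>m. det2 (tang r m) (tang r (m+1)) * det2 (tang r m) (tang r (m+2)) > 0"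
  shows "inj_on (interp r) {real_of_int k ..< real_of_int k + 6}"
proof -
  have aux: "s = s'" if s: "s \<in> {real_of_int k ..< real_of_int k + 6}" and s': "s' \<in> {real_of_int k ..< real_of_int k + 6}"
    and le: "\<lfloor>s\<rfloor> \<le> \<lfloor>s'\<rfloor>" and eq: "interp r s = interp r s'" for s s'
  proof -
    define m where "m = \<lfloor>s\<rfloor>"
    define d where "d = \<lfloor>s'\<rfloor> - m"
    have m1: "k \<le> m" using s by (simp add: m_def le_floor_iff)
    have m2: "\<lfloor>s'\<rfloor> < k + 6" using s' by (simp add: floor_less_iff)
    have d: "0 \<le> d" "d \<le> 5" using le m1 m2 by (auto simp: d_def m_def)
    have fl: "\<lfloor>s'\<rfloor> = m + d" by (simp add: d_def)
    have u: "0 \<le> s - of_int m" "s - of_int m < 1"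
      using of_int_floor_le[of s] real_of_int_floor_add_one_gt[of s] unfolding m_def by linarith+
    have u': "0 \<le> s' - of_int (m + d)" "s' - of_int (m + d) < 1"
      using of_int_floor_le[of s'] real_of_int_floor_add_one_gt[of s'] unfolding fl[symmetric] by linarith+
    have i1: "interp r s = r m + (s - of_int m) *\<^sub>R tang r m"
      by (simp add: interp_def tang_def m_def)
    have i2: "interp r s' = r (m + d) + (s' - of_int (m + d)) *\<^sub>R tang r (m + d)"
      by (simp add: interp_def tang_def fl)
    have "d = 0 \<and> s - of_int m = s' - of_int (m + d)"
      by (rule core[OF nd ap PQ[rule_format, of m] d u u']) (use eq i1 i2 in simp)
    then show ?thesis by simp
  qed
  show ?thesis
    unfolding inj_on_def
  proof (intro ballI impI)
    fix s s' assume "s \<in> {real_of_int k ..< real_of_int k + 6}" "s' \<in> {real_of_int k ..< real_of_int k + 6}"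
      "interp r s = interp r s'"
    then show "s = s'" using aux[of s s'] aux[of s' s] by (cases "\<lfloor>s\<rfloor> \<le> \<lfloor>s'\<rfloor>") auto
  qed
qed

lemma cvx6:
  assumes nd: "nondegenerate r" and ap: "\<forall>k. tang r (k + 3) = - tang r k"
    and PQ: "\<forall>m. det2 (tang r m) (tang r (m+1)) * det2 (tang r m) (tang r (m+2)) > 0"
  shows "convex_curve r"
  unfolding convex_curve_def
proof
  fix k
  define a where "a = tang r k"
  define b where "b = tang r (k+1)"
  define c where "c = tang r (k+2)"
  define P where "P = det2 a b"
  define Q where "Q = det2 a c"
  have PQ': "P * Q > 0" using PQ by (simp add: P_def Q_def a_def b_def c_def)
  note V = verts[OF ap, of k, folded a_def b_def c_def]
  have s1: "r (k+1) = r k + a" by (simp add: tang_def a_def)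
  have per: "\<forall>k. r (k + 6) = r k" using verts(5)[OF ap] by blast
  have val: "\<exists>\<alpha> \<beta>. \<alpha> \<ge> 0 \<and> \<beta> \<ge> 0 \<and> det2 a (r j - r k) = \<alpha> * P + \<beta> * Q" for j
  proof -
    define d where "d = (j - k) mod 6"
    have j: "r j = r (k + d)"
      using periodic6[OF per, of "k + d" "(j - k) div 6"] by (simp add: d_def algebra_simps)
    have "0 \<le> d" "d < 6" by (simp_all add: d_def)
    then have "d = 0 \<or> d = 1 \<or> d = 2 \<or> d = 3 \<or> d = 4 \<or> d = 5" by auto
    then show ?thesis
    proof (elim disjE)
      assume "d = 0" then show ?thesis using j by (intro exI[of _ 0] exI[of _ 0]) simp
    next
      assume "d = 1" then show ?thesis using j s1 by (intro exI[of _ 0] exI[of _ 0]) simp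
    next
      assume "d = 2" then show ?thesis using j V(1) by (intro exI[of _ 1] exI[of _ 0]) (simp add: P_def)
    next
      assume "d = 3" then show ?thesis using j V(2) by (intro exI[of _ 1] exI[of _ 1]) (simp add: P_def Q_def)
    next
      assume "d = 4" then show ?thesis using j V(3) by (intro exI[of _ 1] exI[of _ 1]) (simp add: P_def Q_def)
    next
      assume "d = 5" then show ?thesis using j V(4) by (intro exI[of _ 0] exI[of _ 1]) (simp add: Q_def)
    qed
  qed
  show "(\<forall>j. det2 (tang r k) (r j - r k) \<ge> 0) \<or> (\<forall>j. det2 (tang r k) (r j - r k) \<le> 0)"
  proof (cases "P > 0")
    case True
    then have "Q > 0" using PQ' by (auto simp: zero_less_mult_iff)
    then have "\<forall>j. det2 a (r j - r k) \<ge> 0" using val True by (metis add_nonneg_nonneg less_imp_le mult_nonneg_nonneg)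
    then show ?thesis by (simp add: a_def)
  next
    case False
    then have "P < 0" "Q < 0" using PQ' by (auto simp: zero_less_mult_iff)
    then have "\<forall>j. det2 a (r j - r k) \<le> 0" using val
      by (metis add_nonpos_nonpos less_imp_le mult_nonneg_nonpos)
    then show ?thesis by (simp add: a_def)
  qed
qed


theorem lemma7p11:
  fixes r :: curve
  assumes "nondegenerate r"
    and "\<forall>n. kappa r (n + 6) = kappa r n"
    and "\<forall>n. kappabar r (n + 6) = kappabar r n"
  shows "(closed_period r 6 \<and> simple_closed r 6 \<and> convex_curve r \<and>
          (\<forall>k. tang r (k + 3) = - tang r k))
     \<longleftrightarrow> (\<forall>n. kappa r n > 0 \<and> kappa r n = kappa r (n + 3) \<and>
              kappa r n = 1 / kappabar r (n + 1) \<and> kappa r n = 1 / kappabar r (n + 4) \<and>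
              kappa r n * kappa r (n + 1) * kappa r (n + 2) = 1)"
proof
  assume L: "closed_period r 6 \<and> simple_closed r 6 \<and> convex_curve r \<and> (\<forall>k. tang r (k + 3) = - tang r k)"
  then show "\<forall>n. kappa r n > 0 \<and> kappa r n = kappa r (n + 3) \<and>
              kappa r n = 1 / kappabar r (n + 1) \<and> kappa r n = 1 / kappabar r (n + 4) \<and>
              kappa r n * kappa r (n + 1) * kappa r (n + 2) = 1"
    using fw[OF assms(1)] by blast
next
  note nd = assms(1)
  assume R: "\<forall>n. kappa r n > 0 \<and> kappa r n = kappa r (n + 3) \<and>
              kappa r n = 1 / kappabar r (n + 1) \<and> kappa r n = 1 / kappabar r (n + 4) \<and>
              kappa r n * kappa r (n + 1) * kappa r (n + 2) = 1"
  then have H: "\<forall>n. kappa r n > 0 \<and> kappa r n = 1 / kappabar r (n + 1) \<and>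
              kappa r n * kappa r (n + 1) * kappa r (n + 2) = 1" by blast
  have ap: "\<forall>k. tang r (k + 3) = - tang r k" using bw_antiper[OF nd H] by blast
  have PQ: "\<forall>m. det2 (tang r m) (tang r (m+1)) * det2 (tang r m) (tang r (m+2)) > 0"
    using bw_facts(1,3)[OF nd H] by simp
  have cp: "closed_period r 6"
    unfolding closed_period_def using verts(5)[OF ap] minper[OF nd ap] by auto
  have sc: "simple_closed r 6"
    unfolding simple_closed_def using cp simple6[OF nd ap PQ] by simp
  show "closed_period r 6 \<and> simple_closed r 6 \<and> convex_curve r \<and> (\<forall>k. tang r (k + 3) = - tang r k)"
    using cp sc cvx6[OF nd ap PQ] ap by blast
qed

end
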